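(* Let $Q$ be a commutative A-loop. For $n\ge 0$ let $H_n(Q)=\{x\in Q : x^{2^n}=1\}$ and $H(Q)=\bigcup_{n\ge 0}H_n(Q)$. Then: (i) $H_{n+1}(Q)=\{x\in Q : x^2\in H_n(Q)\}$ for every $n\ge 0$; (ii) $H_{n+1}(Q)\supseteq H_n(Q)$ for every $n\ge 0$; (iii) $H_n(Q)$ is a normal subloop of $Q$ for every $n\ge 0$; (iv) $H(Q)$ is a normal subloop of $Q$.
   Context: A loop is a set with a binary operation and neutral element $1$ in which all left and right translations are bijections; $\mathrm{Inn}(Q)$ is the stabilizer of $1$ in the group generated by all translations. A commutative A-loop is a commutative loop all of whose inner mappings are automorphisms. Such loops are power-associative, so powers are unambiguous. A normal subloop is a subloop invariant under all inner mappings. *)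

theory Defs
  imports Main
begin

definition loop :: "'a set \<Rightarrow> ('a \<Rightarrow> 'a \<Rightarrow> 'a) \<Rightarrow> 'a \<Rightarrow> bool" where
  "loop Q m e \<longleftrightarrow> e \<in> Q \<and> (\<forall>x\<in>Q. \<forall>y\<in>Q. m x y \<in> Q)
     \<and> (\<forall>x\<in>Q. m e x = x \<and> m x e = x)
     \<and> (\<forall>x\<in>Q. bij_betw (m x) Q Q \<and> bij_betw (\<lambda>y. m y x) Q Q)"

text \<open>Left and right translations, extended by the identity outside the carrier
  (so that they are permutations of the whole type).\<close>

definition Ltr :: "'a set \<Rightarrow> ('a \<Rightarrow> 'a \<Rightarrow> 'a) \<Rightarrow> 'a \<Rightarrow> 'a \<Rightarrow> 'a" where
  "Ltr Q m x = (\<lambda>y. if y \<in> Q then m x y else y)"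

definition Rtr :: "'a set \<Rightarrow> ('a \<Rightarrow> 'a \<Rightarrow> 'a) \<Rightarrow> 'a \<Rightarrow> 'a \<Rightarrow> 'a" where
  "Rtr Q m x = (\<lambda>y. if y \<in> Q then m y x else y)"

inductive_set Mlt :: "'a set \<Rightarrow> ('a \<Rightarrow> 'a \<Rightarrow> 'a) \<Rightarrow> ('a \<Rightarrow> 'a) set"
  for Q m where
  Mlt_id: "id \<in> Mlt Q m"
| Mlt_L: "x \<in> Q \<Longrightarrow> Ltr Q m x \<in> Mlt Q m"
| Mlt_R: "x \<in> Q \<Longrightarrow> Rtr Q m x \<in> Mlt Q m"
| Mlt_comp: "f \<in> Mlt Q m \<Longrightarrow> g \<in> Mlt Q m \<Longrightarrow> f \<circ> g \<in> Mlt Q m"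
| Mlt_inv: "f \<in> Mlt Q m \<Longrightarrow> inv f \<in> Mlt Q m"

definition Inn :: "'a set \<Rightarrow> ('a \<Rightarrow> 'a \<Rightarrow> 'a) \<Rightarrow> 'a \<Rightarrow> ('a \<Rightarrow> 'a) set" where
  "Inn Q m e = {f \<in> Mlt Q m. f e = e}"

definition comm_A_loop :: "'a set \<Rightarrow> ('a \<Rightarrow> 'a \<Rightarrow> 'a) \<Rightarrow> 'a \<Rightarrow> bool" where
  "comm_A_loop Q m e \<longleftrightarrow> loop Q m e
     \<and> (\<forall>x\<in>Q. \<forall>y\<in>Q. m x y = m y x)
     \<and> (\<forall>f\<in>Inn Q m e. \<forall>x\<in>Q. \<forall>y\<in>Q. f (m x y) = m (f x) (f y))"

text \<open>Powers (unambiguous in power-associative loops).\<close>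

primrec lpow :: "('a \<Rightarrow> 'a \<Rightarrow> 'a) \<Rightarrow> 'a \<Rightarrow> 'a \<Rightarrow> nat \<Rightarrow> 'a" where
  "lpow m e x 0 = e"
| "lpow m e x (Suc n) = m x (lpow m e x n)"

definition subloop :: "'a set \<Rightarrow> 'a set \<Rightarrow> ('a \<Rightarrow> 'a \<Rightarrow> 'a) \<Rightarrow> 'a \<Rightarrow> bool" where
  "subloop S Q m e \<longleftrightarrow> S \<subseteq> Q \<and> e \<in> S \<and> (\<forall>x\<in>S. \<forall>y\<in>S. m x y \<in> S)
     \<and> (\<forall>a\<in>S. \<forall>b\<in>S. \<forall>x\<in>Q. m a x = b \<longrightarrow> x \<in> S)
     \<and> (\<forall>a\<in>S. \<forall>b\<in>S. \<forall>y\<in>Q. m y a = b \<longrightarrow> y \<in> S)"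

definition normal_subloop :: "'a set \<Rightarrow> 'a set \<Rightarrow> ('a \<Rightarrow> 'a \<Rightarrow> 'a) \<Rightarrow> 'a \<Rightarrow> bool" where
  "normal_subloop S Q m e \<longleftrightarrow> subloop S Q m e \<and> (\<forall>f\<in>Inn Q m e. f ` S \<subseteq> S)"

definition Hn :: "'a set \<Rightarrow> ('a \<Rightarrow> 'a \<Rightarrow> 'a) \<Rightarrow> 'a \<Rightarrow> nat \<Rightarrow> 'a set" where
  "Hn Q m e n = {x \<in> Q. lpow m e x (2 ^ n) = e}"

definition Hall :: "'a set \<Rightarrow> ('a \<Rightarrow> 'a \<Rightarrow> 'a) \<Rightarrow> 'a \<Rightarrow> 'a set" where
  "Hall Q m e = (\<Union>n. Hn Q m e n)"

end

theory Submission imports Defs begin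
locale cl0 = fixes Q :: "'a set" and m :: "'a \<Rightarrow> 'a \<Rightarrow> 'a" and e :: 'a and ld :: "'a \<Rightarrow> 'a \<Rightarrow> 'a"
  assumes eQ[simp]: "e \<in> Q" and mQ[simp]: "x\<in>Q \<Longrightarrow> y\<in>Q \<Longrightarrow> m x y \<in> Q"
  and ldQ[simp]: "x\<in>Q \<Longrightarrow> y\<in>Q \<Longrightarrow> ld x y \<in> Q"
  and com: "x\<in>Q \<Longrightarrow> y\<in>Q \<Longrightarrow> m x y = m y x"
  and lid: "x\<in>Q \<Longrightarrow> m e x = x"
  and d1: "x\<in>Q \<Longrightarrow> y\<in>Q \<Longrightarrow> m x (ld x y) = y"
  and d2: "x\<in>Q \<Longrightarrow> y\<in>Q \<Longrightarrow> ld x (m x y) = y"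
  and A: "x\<in>Q \<Longrightarrow> y\<in>Q \<Longrightarrow> a\<in>Q \<Longrightarrow> b\<in>Q \<Longrightarrow>
     ld (m x y) (m x (m y (m a b))) = m (ld (m x y) (m x (m y a))) (ld (m x y) (m x (m y b)))"
begin
lemma c12: "x\<in>Q \<Longrightarrow> y\<in>Q \<Longrightarrow> ld x (m y x) = y"
  by (metis d2 com)
lemma c14: "x\<in>Q \<Longrightarrow> y\<in>Q \<Longrightarrow> m x (ld (m x x) (m x (m x y))) = ld (m x x) (m x (m x (m x y)))"
  using A[of x x x y] c12[of "m x x" x] by simp
lemma c16: "x\<in>Q \<Longrightarrow> y\<in>Q \<Longrightarrow> m x (ld (m x x) (m x y)) = ld (m x x) (m x (m x y))"
  using c14[of x "ld x y"] d1[of x y] by simp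
lemma c17: "x\<in>Q \<Longrightarrow> y\<in>Q \<Longrightarrow> m x (ld (m x x) y) = ld (m x x) (m x y)"
  using c16[of x "ld x y"] d1[of x y] by simp
lemma c19: "x\<in>Q \<Longrightarrow> y\<in>Q \<Longrightarrow> ld (m x x) (m x (m (m x x) y)) = m x y"
  using c17[of x "m (m x x) y"] d2[of "m x x" y] by simp
lemma c21: "x\<in>Q \<Longrightarrow> y\<in>Q \<Longrightarrow> m (m x x) (m x y) = m x (m (m x x) y)"
  using d1[of "m x x" "m x (m (m x x) y)"] c19[of x y] by simp
lemma c22: "x\<in>Q \<Longrightarrow> y\<in>Q \<Longrightarrow> z\<in>Q \<Longrightarrow> w\<in>Q \<Longrightarrow>
   ld (ld (m x y) (m x (m y z))) (ld (m x y) (m x (m y (m z w)))) = ld (m x y) (m x (m y w))"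
  using A[of x y z w] d2[of "ld (m x y) (m x (m y z))" "ld (m x y) (m x (m y w))"] by simp
lemma c23: "x\<in>Q \<Longrightarrow> m x e = x"
  by (metis lid com eQ)
lemma c24: "x\<in>Q \<Longrightarrow> y\<in>Q \<Longrightarrow> m x (m (m x x) (ld x y)) = m (m x x) y"
  using c21[of x "ld x y"] d1[of x y] by simp
lemma c25: "x\<in>Q \<Longrightarrow> y\<in>Q \<Longrightarrow> z\<in>Q \<Longrightarrow> w\<in>Q \<Longrightarrow>
   ld (ld (m x y) (m x (m y z))) (ld (m x y) (m x (m y w))) = ld (m x y) (m x (m y (ld z w)))"
  using c22[of x y z "ld z w"] d1[of z w] by simp
lemma c26: "x\<in>Q \<Longrightarrow> ld x x = e"
  using d2[of x e] c23[of x] by simp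
lemma c27: "x\<in>Q \<Longrightarrow> y\<in>Q \<Longrightarrow> m (m x x) (ld x y) = ld x (m (m x x) y)"
  using d2[of x "m (m x x) (ld x y)"] c24[of x y] by simp
lemma c28: "x\<in>Q \<Longrightarrow> y\<in>Q \<Longrightarrow> z\<in>Q \<Longrightarrow>
   ld (ld (m x y) (m x (m y z))) e = ld (m x y) (m x (m y (ld z e)))"
  using c25[of x y z e] c23[of y] c26[of "m x y"] by simp
lemma c29: "x\<in>Q \<Longrightarrow> y\<in>Q \<Longrightarrow> m (ld x y) (m x x) = ld x (m (m x x) y)"
  using com[of "ld x y" "m x x"] c27[of x y] by simp
lemma c30: "x\<in>Q \<Longrightarrow> y\<in>Q \<Longrightarrow> ld (ld x y) y = x"
  using c12[of "ld x y" x] d1[of x y] by simp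
lemma c31: "x\<in>Q \<Longrightarrow> y\<in>Q \<Longrightarrow> ld (ld x (ld y (m (m y y) x))) e = ld x (ld y x)"
  using c28[of "ld y x" y y] com[of "ld y x" y] d1[of y x] c29[of y x] d1[of y e] c23[of "ld y x"] by simp
lemma c32: "x\<in>Q \<Longrightarrow> y\<in>Q \<Longrightarrow> ld x (ld y (m (m y y) x)) = ld (ld x (ld y x)) e"
  by (metis c30 c31 mQ ldQ eQ)
lemma c33: "x\<in>Q \<Longrightarrow> y\<in>Q \<Longrightarrow> m (m x x) (m y x) = m x (m (m x x) y)"
  by (metis c21 com mQ)
lemma c34: "x\<in>Q \<Longrightarrow> y\<in>Q \<Longrightarrow> ld (m x y) (m (m y y) x) = ld (ld (m x y) x) e"
  by (metis c32 c33 d2 c12 mQ ldQ eQ)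
lemma c35: "x\<in>Q \<Longrightarrow> y\<in>Q \<Longrightarrow> m (m x y) (ld (ld (m x y) x) e) = m (m y y) x"
  by (metis d1 c34 mQ ldQ eQ)
lemma c36: "x\<in>Q \<Longrightarrow> y\<in>Q \<Longrightarrow> z\<in>Q \<Longrightarrow> w\<in>Q \<Longrightarrow>
  m (ld (m x y) (m x (m y z))) (ld (m x y) (m x w)) = ld (m x y) (m x (m y (m z (ld y w))))"
  by (metis A d1 mQ ldQ)
lemma c37: "x\<in>Q \<Longrightarrow> y\<in>Q \<Longrightarrow> m x (m (ld x y) (ld x y)) = m y (ld (ld y x) e)"
  by (metis c35 d1 com mQ ldQ eQ)
lemma c38: "x\<in>Q \<Longrightarrow> y\<in>Q \<Longrightarrow> z\<in>Q \<Longrightarrow> m (ld (ld x y) e) (ld x (m y z)) = ld x (m y (m (ld y x) z))"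
proof -
  assume h: "x\<in>Q" "y\<in>Q" "z\<in>Q"
  have h1: "ld x (m y (m (ld y x) (ld y x))) = ld (ld x y) e"
    using c37[of y x] d2[of x "ld (ld x y) e"] h by simp
  show ?thesis using c36[of y "ld y x" "ld y x" z] d1[of y x] d1[of "ld y x" z] h1 h by simp
qed
lemma c39: "x\<in>Q \<Longrightarrow> ld e x = x"
  by (metis lid d1 ldQ eQ)
lemma c40: "x\<in>Q \<Longrightarrow> y\<in>Q \<Longrightarrow> m (ld x e) (m x y) = m x (m (ld x e) y)"
  using c38[of e x y] c39[of x] c39[of "m x y"] c39[of "m x (m (ld x e) y)"] by simp
lemma c41: "x\<in>Q \<Longrightarrow> y\<in>Q \<Longrightarrow> m x (m (ld x e) (ld x y)) = m (ld x e) y"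
  using c40[of x "ld x y"] d1[of x y] by simp
lemma c42: "x\<in>Q \<Longrightarrow> y\<in>Q \<Longrightarrow> m x (m (ld x e) (ld y e)) = ld (m x (m (ld x e) y)) e"
  using c28[of "ld x e" x y] com[of "ld x e" x] d1[of x e] c39 c40[of x y] c40[of x "ld y e"] by simp
lemma c43: "x\<in>Q \<Longrightarrow> y\<in>Q \<Longrightarrow> m (ld x e) (ld x y) = ld x (m (ld x e) y)"
  using d2[of x "m (ld x e) (ld x y)"] c41[of x y] by simp
lemma c44: "x\<in>Q \<Longrightarrow> y\<in>Q \<Longrightarrow> ld x (ld (m x (m (ld x e) y)) e) = m (ld x e) (ld y e)"
  using d2[of x "m (ld x e) (ld y e)"] c42[of x y] by simp
lemma c46: "x\<in>Q \<Longrightarrow> y\<in>Q \<Longrightarrow> z\<in>Q \<Longrightarrow> ld x (m y (m (ld y x) (ld y z))) = m (ld (ld x y) e) (ld x z)"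
  using c38[of x y "ld y z"] d1[of y z] by simp
lemma c47: "x\<in>Q \<Longrightarrow> y\<in>Q \<Longrightarrow> m (ld x y) (ld x e) = ld x (m (ld x e) y)"
  using com[of "ld x y" "ld x e"] c43[of x y] by simp
lemma c48: "x\<in>Q \<Longrightarrow> y\<in>Q \<Longrightarrow> m (ld x e) (ld (ld x y) e) = ld x (ld (m (ld x e) y) e)"
  using c44[of x "ld x y"] c41[of x y] by simp
lemma c49: "x\<in>Q \<Longrightarrow> y\<in>Q \<Longrightarrow> m (ld (ld x y) e) (ld x e) = ld y e"
  using c46[of x y e] c47[of y x] d1[of y "m (ld y e) x"] c12[of x "ld y e"] by simp
lemma c50: "x\<in>Q \<Longrightarrow> y\<in>Q \<Longrightarrow> ld x (ld (m (ld x e) y) e) = ld y e"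
  using c49[of x y] com[of "ld (ld x y) e" "ld x e"] c48[of x y] by simp
lemma c52: "x\<in>Q \<Longrightarrow> y\<in>Q \<Longrightarrow> ld (m (ld x e) y) e = m x (ld y e)"
  using d1[of x "ld (m (ld x e) y) e"] c50[of x y] by simp
lemma aip: "x\<in>Q \<Longrightarrow> y\<in>Q \<Longrightarrow> ld (m x y) e = m (ld x e) (ld y e)"
  using c52[of "ld x e" y] c30[of x e] by simp
lemma sq: "x\<in>Q \<Longrightarrow> ld (ld x e) x = m x x"
  using c40[of x x] com[of "ld x e" x] d1[of x e] c23[of x] d2[of "ld x e" "m x x"] by simp
end

locale cal = fixes Q :: "'a set" and m :: "'a \<Rightarrow> 'a \<Rightarrow> 'a" and e :: 'a
  assumes cA: "comm_A_loop Q m e"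
begin

lemma Lp: "loop Q m e" using cA unfolding comm_A_loop_def by auto
lemma eQ[simp]: "e \<in> Q" using Lp unfolding loop_def by auto
lemma mQ[simp]: "x\<in>Q \<Longrightarrow> y\<in>Q \<Longrightarrow> m x y \<in> Q" using Lp unfolding loop_def by auto
lemma lid: "x\<in>Q \<Longrightarrow> m e x = x" using Lp unfolding loop_def by auto
lemma rid: "x\<in>Q \<Longrightarrow> m x e = x" using Lp unfolding loop_def by auto
lemma bijL: "x\<in>Q \<Longrightarrow> bij_betw (m x) Q Q" using Lp unfolding loop_def by auto
lemma com: "x\<in>Q \<Longrightarrow> y\<in>Q \<Longrightarrow> m x y = m y x" using cA unfolding comm_A_loop_def by auto
lemma aut: "f \<in> Inn Q m e \<Longrightarrow> x\<in>Q \<Longrightarrow> y\<in>Q \<Longrightarrow> f (m x y) = m (f x) (f y)"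
  using cA unfolding comm_A_loop_def by auto

definition ld where "ld x y = inv_into Q (m x) y"

lemma ldQ[simp]: "x\<in>Q \<Longrightarrow> y\<in>Q \<Longrightarrow> ld x y \<in> Q"
  unfolding ld_def using bijL by (metis bij_betw_def inv_into_into)
lemma d1: "x\<in>Q \<Longrightarrow> y\<in>Q \<Longrightarrow> m x (ld x y) = y"
  unfolding ld_def using bijL by (metis bij_betw_def f_inv_into_f)
lemma d2: "x\<in>Q \<Longrightarrow> y\<in>Q \<Longrightarrow> ld x (m x y) = y"
  unfolding ld_def using bijL by (metis bij_betw_def inv_into_f_f)

lemma Ltr_in: "y\<in>Q \<Longrightarrow> Ltr Q m x y = m x y" by (simp add: Ltr_def)
lemma Ltr_out: "y\<notin>Q \<Longrightarrow> Ltr Q m x y = y" by (simp add: Ltr_def)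

lemma bij_Ltr: assumes "x\<in>Q" shows "bij (Ltr Q m x)"
proof (rule bijI)
  show "inj (Ltr Q m x)"
  proof (rule injI)
    fix a b assume h: "Ltr Q m x a = Ltr Q m x b"
    show "a = b"
    proof (cases "a\<in>Q"; cases "b\<in>Q")
      assume "a\<in>Q" "b\<in>Q" thus ?thesis using h assms by (metis Ltr_in d2)
    next
      assume "a\<in>Q" "b\<notin>Q" thus ?thesis using h assms by (metis Ltr_in Ltr_out mQ)
    next
      assume "a\<notin>Q" "b\<in>Q" thus ?thesis using h assms by (metis Ltr_in Ltr_out mQ)
    next
      assume "a\<notin>Q" "b\<notin>Q" thus ?thesis using h by (simp add: Ltr_out)
    qed
  qed
  show "surj (Ltr Q m x)"
  proof -
    have "z \<in> range (Ltr Q m x)" for z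
    proof (cases "z\<in>Q")
      case True
      hence "Ltr Q m x (ld x z) = z" using assms by (simp add: Ltr_in d1)
      thus ?thesis by (metis rangeI)
    next
      case False thus ?thesis by (metis Ltr_out rangeI)
    qed
    thus ?thesis by blast
  qed
qed

lemma inv_Ltr: assumes "x\<in>Q" "z\<in>Q" shows "inv (Ltr Q m x) z = ld x z"
proof -
  have "Ltr Q m x (ld x z) = z" using assms by (simp add: Ltr_in d1)
  thus ?thesis using inv_f_eq[OF bij_is_inj[OF bij_Ltr[OF assms(1)]]] by blast
qed

lemma Rtr_eq: "x\<in>Q \<Longrightarrow> Rtr Q m x = Ltr Q m x"
  by (auto simp: Rtr_def Ltr_def com intro!: ext)

lemma Mlt_bij: "f \<in> Mlt Q m \<Longrightarrow> bij f \<and> (\<forall>z. f z \<in> Q \<longleftrightarrow> z \<in> Q)"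
proof (induction rule: Mlt.induct)
  case Mlt_id thus ?case by (simp add: bij_def)
next
  case (Mlt_L x) thus ?case using bij_Ltr by (metis Ltr_in Ltr_out mQ)
next
  case (Mlt_R x) thus ?case using bij_Ltr Rtr_eq by (metis Ltr_in Ltr_out mQ)
next
  case (Mlt_comp f g) thus ?case using bij_comp[of g f] by (simp add: comp_def)
next
  case (Mlt_inv f)
  have "bij (inv f)" using Mlt_inv bij_imp_bij_inv by blast
  moreover have "inv f z \<in> Q \<longleftrightarrow> z \<in> Q" for z
    using Mlt_inv by (metis bij_inv_eq_iff)
  ultimately show ?case by blast
qed

lemma Inn_I: "f \<in> Mlt Q m \<Longrightarrow> f e = e \<Longrightarrow> f \<in> Inn Q m e" by (simp add: Inn_def)
lemma Inn_e: "f \<in> Inn Q m e \<Longrightarrow> f e = e" by (simp add: Inn_def)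
lemma Inn_Q: "f \<in> Inn Q m e \<Longrightarrow> x \<in> Q \<Longrightarrow> f x \<in> Q" using Mlt_bij by (auto simp: Inn_def)

lemma ld_self: "x\<in>Q \<Longrightarrow> ld x x = e" using d2[of x e] rid[of x] by simp

definition Lxy where "Lxy x y = inv (Ltr Q m (m x y)) \<circ> Ltr Q m x \<circ> Ltr Q m y"

lemma Lxy_Mlt: "x\<in>Q \<Longrightarrow> y\<in>Q \<Longrightarrow> Lxy x y \<in> Mlt Q m"
  unfolding Lxy_def by (intro Mlt_comp Mlt_inv Mlt_L) auto
lemma Lxy_val: "x\<in>Q \<Longrightarrow> y\<in>Q \<Longrightarrow> z\<in>Q \<Longrightarrow> Lxy x y z = ld (m x y) (m x (m y z))"
  unfolding Lxy_def by (simp add: Ltr_in inv_Ltr)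
lemma Lxy_Inn: "x\<in>Q \<Longrightarrow> y\<in>Q \<Longrightarrow> Lxy x y \<in> Inn Q m e"
  by (rule Inn_I) (simp_all add: Lxy_Mlt Lxy_val rid ld_self)
lemma invLxy_Inn: "x\<in>Q \<Longrightarrow> y\<in>Q \<Longrightarrow> inv (Lxy x y) \<in> Inn Q m e"
proof (rule Inn_I)
  assume h: "x\<in>Q" "y\<in>Q"
  show "inv (Lxy x y) \<in> Mlt Q m" using h by (simp add: Lxy_Mlt Mlt_inv)
  have "bij (Lxy x y)" using h Lxy_Mlt Mlt_bij by blast
  thus "inv (Lxy x y) e = e" using Inn_e[OF Lxy_Inn[OF h]] by (simp add: bij_is_inj inv_f_eq)
qed
lemma invLxy_val: assumes h: "x\<in>Q" "y\<in>Q" "z\<in>Q"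
  shows "inv (Lxy x y) z = ld y (ld x (m (m x y) z))"
proof -
  have "bij (Lxy x y)" using h Lxy_Mlt Mlt_bij by blast
  moreover have "Lxy x y (ld y (ld x (m (m x y) z))) = z"
    using h by (simp add: Lxy_val d1 d2)
  ultimately show ?thesis by (simp add: bij_is_inj inv_f_eq)
qed

lemma Aax: "x\<in>Q \<Longrightarrow> y\<in>Q \<Longrightarrow> a\<in>Q \<Longrightarrow> b\<in>Q \<Longrightarrow>
     ld (m x y) (m x (m y (m a b))) = m (ld (m x y) (m x (m y a))) (ld (m x y) (m x (m y b)))"
  using aut[OF Lxy_Inn, of x y a b] by (simp add: Lxy_val)

sublocale cl0 Q m e ld
  by unfold_locales (fact eQ, fact mQ, fact ldQ, fact com, fact lid, fact d1, fact d2, fact Aax)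

end

context cal begin

lemma powQ[simp]: "x\<in>Q \<Longrightarrow> lpow m e x k \<in> Q" by (induction k) auto

lemma aut_pow: "f \<in> Inn Q m e \<Longrightarrow> x\<in>Q \<Longrightarrow> f (lpow m e x k) = lpow m e (f x) k"
  by (induction k) (simp_all add: Inn_e aut)

lemma Mlt_funpow: "x\<in>Q \<Longrightarrow> Ltr Q m x ^^ k \<in> Mlt Q m"
  by (induction k) (simp_all add: Mlt_id Mlt_L Mlt_comp)

lemma funpow_val: "x\<in>Q \<Longrightarrow> (Ltr Q m x ^^ a) (lpow m e x b) = lpow m e x (a+b)"
  by (induction a) (simp_all add: Ltr_in)

lemma pa: assumes x: "x\<in>Q" shows "m (lpow m e x a) (lpow m e x b) = lpow m e x (a+b)"
proof -
  define p where "p = lpow m e x a"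
  have pQ: "p \<in> Q" using x by (simp add: p_def)
  define psi where "psi = inv (Ltr Q m p) \<circ> (Ltr Q m x ^^ a)"
  have psiM: "psi \<in> Mlt Q m" unfolding psi_def using x pQ by (intro Mlt_comp Mlt_inv Mlt_L Mlt_funpow)
  have v: "psi (lpow m e x c) = ld p (lpow m e x (a+c))" for c
    unfolding psi_def using x pQ by (simp add: funpow_val inv_Ltr)
  have "psi e = ld p (lpow m e x a)" using v[of 0] by simp
  hence "psi e = e" using pQ ld_self by (simp add: p_def)
  hence psiI: "psi \<in> Inn Q m e" using psiM Inn_I by blast
  have "psi (lpow m e x 1) = ld p (m x p)" using v[of 1] by (simp add: p_def)
  also have "\<dots> = x" using x pQ com[of x p] d2 by simp
  finally have "psi x = x" using x rid by simp
  hence "psi (lpow m e x b) = lpow m e x b" using aut_pow[OF psiI x] by simp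
  hence "ld p (lpow m e x (a+b)) = lpow m e x b" using v by simp
  hence "m p (lpow m e x b) = m p (ld p (lpow m e x (a+b)))" by simp
  also have "\<dots> = lpow m e x (a+b)" using pQ x d1 by simp
  finally show ?thesis by (simp add: p_def)
qed

lemma sqpow: "x\<in>Q \<Longrightarrow> lpow m e (m x x) k = lpow m e x (2*k)"
proof (induction k)
  case 0 thus ?case by simp
next
  case (Suc k)
  have "m x x = lpow m e x 2" using Suc.prems rid by (simp add: numeral_2_eq_2)
  hence "lpow m e (m x x) (Suc k) = m (lpow m e x 2) (lpow m e x (2*k))" using Suc by simp
  also have "\<dots> = lpow m e x (2*Suc k)" using pa Suc.prems by simp
  finally show ?case .
qed

lemma part1: "Hn Q m e (Suc n) = {x \<in> Q. m x x \<in> Hn Q m e n}"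
proof -
  have "lpow m e x (2^Suc n) = lpow m e (m x x) (2^n)" if "x\<in>Q" for x
    using sqpow[OF that] by simp
  thus ?thesis unfolding Hn_def by auto
qed

lemma part2: "Hn Q m e n \<subseteq> Hn Q m e (Suc n)"
proof
  fix x assume "x \<in> Hn Q m e n"
  hence x: "x\<in>Q" "lpow m e x (2^n) = e" by (auto simp: Hn_def)
  have "lpow m e x (2^Suc n) = m (lpow m e x (2^n)) (lpow m e x (2^n))"
    using pa[OF x(1)] by (simp add: mult_2)
  thus "x \<in> Hn Q m e (Suc n)" using x lid by (simp add: Hn_def)
qed

lemma mono_H: "i \<le> j \<Longrightarrow> Hn Q m e i \<subseteq> Hn Q m e j"
  by (induction j rule: dec_induct) (use part2 in auto)

lemma inv_H: "f \<in> Inn Q m e \<Longrightarrow> f ` Hn Q m e n \<subseteq> Hn Q m e n"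
  by (auto simp: Hn_def Inn_Q aut_pow[symmetric] Inn_e)

end

locale nsl = cal + fixes N assumes NS: "normal_subloop N Q m e"
begin
lemma NQ: "N \<subseteq> Q" using NS unfolding normal_subloop_def subloop_def by blast
lemma eN: "e \<in> N" using NS unfolding normal_subloop_def subloop_def by blast
lemma mN: "a\<in>N \<Longrightarrow> b\<in>N \<Longrightarrow> m a b \<in> N" using NS unfolding normal_subloop_def subloop_def by blast
lemma divN: "a\<in>N \<Longrightarrow> b\<in>N \<Longrightarrow> x\<in>Q \<Longrightarrow> m a x = b \<Longrightarrow> x \<in> N"
  using NS unfolding normal_subloop_def subloop_def by blast
lemma innN: "f \<in> Inn Q m e \<Longrightarrow> n \<in> N \<Longrightarrow> f n \<in> N" using NS unfolding normal_subloop_def by blast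
lemma nQ: "n \<in> N \<Longrightarrow> n \<in> Q" using NQ by blast

lemma NL: "x\<in>Q \<Longrightarrow> y\<in>Q \<Longrightarrow> n\<in>N \<Longrightarrow> ld (m x y) (m x (m y n)) \<in> N"
  using innN[OF Lxy_Inn, of x y n] by (simp add: Lxy_val nQ)
lemma NLi: "x\<in>Q \<Longrightarrow> y\<in>Q \<Longrightarrow> n\<in>N \<Longrightarrow> ld y (ld x (m (m x y) n)) \<in> N"
  using innN[OF invLxy_Inn, of x y n] by (simp add: invLxy_val nQ)

lemma S: assumes "x\<in>Q" "y\<in>Q" "ld x y \<in> N" shows "ld y x \<in> N"
proof -
  define n where "n = ld x y"
  have n: "n \<in> N" "n\<in>Q" using assms nQ by (auto simp: n_def)
  have y: "y = m x n" using assms d1 by (simp add: n_def)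
  have n': "ld n e \<in> N" using divN[OF n(1) eN, of "ld n e"] n d1 by simp
  have "ld (m x n) (m x (m n (ld n e))) \<in> N" using NL[OF assms(1) n(2) n'] .
  thus ?thesis using y n assms d1 rid by simp
qed

lemma T: assumes "x\<in>Q" "y\<in>Q" "z\<in>Q" "ld x y \<in> N" "ld y z \<in> N" shows "ld x z \<in> N"
proof -
  define n where "n = ld x y"
  define k where "k = ld y z"
  have n: "n\<in>N" "n\<in>Q" and k: "k\<in>N" "k\<in>Q" using assms nQ by (auto simp: n_def k_def)
  have y: "y = m x n" using assms d1 by (simp add: n_def)
  have z: "z = m (m x n) k" using assms d1 y by (simp add: k_def)
  have j: "ld n (ld x z) \<in> N" using NLi[OF assms(1) n(2) k(1)] z by simp
  have "ld x z = m n (ld n (ld x z))" using n assms d1 by simp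
  thus ?thesis using mN[OF n(1) j] by simp
qed

lemma C: assumes "x\<in>Q" "x2\<in>Q" "z\<in>Q" "ld x x2 \<in> N" shows "ld (m x z) (m x2 z) \<in> N"
proof -
  define n where "n = ld x x2"
  have n: "n\<in>N" "n\<in>Q" using assms nQ by (auto simp: n_def)
  have x2: "x2 = m x n" using assms d1 by (simp add: n_def)
  have "ld (m z x) (m z (m x n)) \<in> N" using NL[OF assms(3) assms(1) n(1)] .
  thus ?thesis using x2 com assms n by (metis mQ)
qed

lemma Can: assumes "a\<in>Q" "z\<in>Q" "w\<in>Q" "ld (m a z) (m a w) \<in> N" shows "ld z w \<in> N"
proof -
  define n where "n = ld (m a z) (m a w)"
  have n: "n\<in>N" "n\<in>Q" using assms nQ by (auto simp: n_def)
  have "m a w = m (m a z) n" using assms d1 by (simp add: n_def)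
  hence "ld a (m (m a z) n) = w" using assms d2[of a w] by metis
  hence "ld z (ld a (m (m a z) n)) = ld z w" by simp
  thus ?thesis using NLi[OF assms(1) assms(2) n(1)] by simp
qed

lemma key: "x\<in>Q \<Longrightarrow> m x x \<in> N \<longleftrightarrow> ld (ld x e) x \<in> N" using sq by simp

lemma step: "subloop {x\<in>Q. m x x \<in> N} Q m e"
proof -
  let ?H = "{x\<in>Q. m x x \<in> N}"
  have cl: "m x y \<in> ?H" if "x \<in> ?H" "y \<in> ?H" for x y
  proof -
    have x: "x\<in>Q" "ld (ld x e) x \<in> N" using that key by auto
    have y: "y\<in>Q" "ld (ld y e) y \<in> N" using that key by auto
    have 1: "ld (m (ld x e) (ld y e)) (m x (ld y e)) \<in> N" using C[of "ld x e" x "ld y e"] x y by simp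
    have 2: "ld (m x (ld y e)) (m x y) \<in> N" using C[of "ld y e" y x] x y com[of "ld y e" x] com[of y x] by simp
    have "ld (m (ld x e) (ld y e)) (m x y) \<in> N" using T[OF _ _ _ 1 2] x y by simp
    hence "ld (ld (m x y) e) (m x y) \<in> N" using aip x y by simp
    thus ?thesis using key x y by simp
  qed
  have dv: "x \<in> ?H" if "a \<in> ?H" "b \<in> ?H" "x\<in>Q" "m a x = b" for a b x
  proof -
    have a: "a\<in>Q" "ld (ld a e) a \<in> N" using that key by auto
    have b: "b\<in>Q" "ld (ld b e) b \<in> N" using that key by auto
    have ib: "ld b e = m (ld a e) (ld x e)" using aip[of a x] that(3,4) a(1) by simp
    have 1: "ld (m (ld a e) x) b \<in> N" using C[of "ld a e" a x] a that by simp
    have 2: "ld b (m (ld a e) x) \<in> N" using S[OF _ _ 1] a b that by simp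
    have 3: "ld (m (ld a e) (ld x e)) (m (ld a e) x) \<in> N" using T[OF _ _ _ b(2)[unfolded ib] 2[unfolded ib]] a that by simp
    hence "ld (ld x e) x \<in> N" using Can[OF _ _ _ 3] a that by simp
    thus ?thesis using key that by simp
  qed
  show ?thesis unfolding subloop_def
  proof (intro conjI ballI impI)
    show "?H \<subseteq> Q" by auto
    show "e \<in> ?H" using eN by (simp add: rid)
    show "m x y \<in> ?H" if "x \<in> ?H" "y \<in> ?H" for x y using cl that by blast
    show "x \<in> ?H" if "a \<in> ?H" "b \<in> ?H" "x\<in>Q" "m a x = b" for a b x using dv that by blast
    show "y \<in> ?H" if "a \<in> ?H" "b \<in> ?H" "y\<in>Q" "m y a = b" for a b y
    proof -
      have aQ: "a\<in>Q" using that(1) by blast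
      have "m a y = b" using com[OF aQ that(3)] that(4) by simp
      thus ?thesis by (rule dv[OF that(1,2,3)])
    qed
  qed
qed
end

context cal begin
lemma part3: "normal_subloop (Hn Q m e n) Q m e"
proof (induction n)
  case 0
  have H0: "Hn Q m e 0 = {e}" by (auto simp: Hn_def rid)
  have "subloop {e} Q m e" unfolding subloop_def using lid rid by auto
  thus ?case using inv_H[of _ 0] H0 by (simp add: normal_subloop_def)
next
  case (Suc n)
  interpret nsl Q m e "Hn Q m e n" by unfold_locales (rule Suc.IH)
  have "subloop (Hn Q m e (Suc n)) Q m e" unfolding part1[of n] by (rule step)
  thus ?case using inv_H[of _ "Suc n"] unfolding normal_subloop_def by blast
qed

lemma part4: "normal_subloop (Hall Q m e) Q m e"
proof -
  let ?U = "Hall Q m e"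
  have sl: "subloop (Hn Q m e n) Q m e" for n using part3 unfolding normal_subloop_def by blast
  have slQ: "Hn Q m e n \<subseteq> Q" for n using sl[of n] unfolding subloop_def by blast
  have sle: "e \<in> Hn Q m e n" for n using sl[of n] unfolding subloop_def by blast
  have slm: "x \<in> Hn Q m e n \<Longrightarrow> y \<in> Hn Q m e n \<Longrightarrow> m x y \<in> Hn Q m e n" for n x y
    using sl[of n] unfolding subloop_def by blast
  have sld: "a \<in> Hn Q m e n \<Longrightarrow> b \<in> Hn Q m e n \<Longrightarrow> x \<in> Q \<Longrightarrow> m a x = b \<Longrightarrow> x \<in> Hn Q m e n" for n a b x
    using sl[of n] unfolding subloop_def by blast
  have slr: "a \<in> Hn Q m e n \<Longrightarrow> b \<in> Hn Q m e n \<Longrightarrow> y \<in> Q \<Longrightarrow> m y a = b \<Longrightarrow> y \<in> Hn Q m e n" for n a b y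
    using sl[of n] unfolding subloop_def by blast
  have U: "x \<in> ?U \<longleftrightarrow> (\<exists>n. x \<in> Hn Q m e n)" for x by (simp add: Hall_def)
  have two: "\<exists>n. x \<in> Hn Q m e n \<and> y \<in> Hn Q m e n" if xy: "x \<in> ?U" "y \<in> ?U" for x y
  proof -
    obtain i j where ij: "x \<in> Hn Q m e i" "y \<in> Hn Q m e j" using xy U by blast
    have "Hn Q m e i \<subseteq> Hn Q m e (max i j)" by (rule mono_H) simp
    moreover have "Hn Q m e j \<subseteq> Hn Q m e (max i j)" by (rule mono_H) simp
    ultimately show ?thesis using ij by blast
  qed
  have c1: "?U \<subseteq> Q" using slQ U by blast
  have c2: "e \<in> ?U" using sle U by blast
  have c3: "\<forall>x\<in>?U. \<forall>y\<in>?U. m x y \<in> ?U"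
  proof (intro ballI)
    fix x y assume "x \<in> ?U" "y \<in> ?U"
    then obtain n where "x \<in> Hn Q m e n" "y \<in> Hn Q m e n" using two by blast
    hence "m x y \<in> Hn Q m e n" by (rule slm)
    thus "m x y \<in> ?U" using U by blast
  qed
  have c4: "\<forall>a\<in>?U. \<forall>b\<in>?U. \<forall>x\<in>Q. m a x = b \<longrightarrow> x \<in> ?U"
  proof (intro ballI impI)
    fix a b x assume "a \<in> ?U" "b \<in> ?U" "x \<in> Q" "m a x = b"
    moreover obtain n where "a \<in> Hn Q m e n" "b \<in> Hn Q m e n" using two calculation(1,2) by blast
    ultimately have "x \<in> Hn Q m e n" using sld by blast
    thus "x \<in> ?U" using U by blast
  qed
  have c5: "\<forall>a\<in>?U. \<forall>b\<in>?U. \<forall>y\<in>Q. m y a = b \<longrightarrow> y \<in> ?U"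
  proof (intro ballI impI)
    fix a b y assume "a \<in> ?U" "b \<in> ?U" "y \<in> Q" "m y a = b"
    moreover obtain n where "a \<in> Hn Q m e n" "b \<in> Hn Q m e n" using two calculation(1,2) by blast
    ultimately have "y \<in> Hn Q m e n" using slr by blast
    thus "y \<in> ?U" using U by blast
  qed
  have sub: "subloop ?U Q m e" unfolding subloop_def using c1 c2 c3 c4 c5 by blast
  have inn: "\<forall>f\<in>Inn Q m e. f ` ?U \<subseteq> ?U"
  proof
    fix f assume f: "f \<in> Inn Q m e"
    show "f ` ?U \<subseteq> ?U"
    proof
      fix z assume "z \<in> f ` ?U"
      then obtain x n where "z = f x" "x \<in> Hn Q m e n" using U by blast
      hence "z \<in> Hn Q m e n" using inv_H[OF f, of n] by blast
      thus "z \<in> ?U" using U by blast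
    qed
  qed
  show ?thesis unfolding normal_subloop_def using sub inn by blast
qed
end

theorem theorem5p6:
  fixes Q :: "'a set" and m :: "'a \<Rightarrow> 'a \<Rightarrow> 'a" and e :: 'a
  assumes "comm_A_loop Q m e"
  shows "(\<forall>n. Hn Q m e (Suc n) = {x \<in> Q. m x x \<in> Hn Q m e n})
       \<and> (\<forall>n. Hn Q m e n \<subseteq> Hn Q m e (Suc n))
       \<and> (\<forall>n. normal_subloop (Hn Q m e n) Q m e)
       \<and> normal_subloop (Hall Q m e) Q m e"
proof -
  interpret cal Q m e by unfold_locales (rule assms)
  show ?thesis by (intro conjI allI part1 part2 part3 part4)
qed

end
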